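(* Let $\mathcal{H}$ be a collection of nonempty loopless graphs, each with an even number of edges. Let $n,m\geq 2$ be integers with $n\geq 4^m$, and let $\mathcal{G}\subseteq\mathbb{F}_2^{\binom{[n]}{2}}$ be an $\mathcal{H}$-code with $\mathbb{P}[\mathcal{G}]=\delta_n(\mathcal{H})$. Then $$\big\|\widehat{\big(\mathbb{1}_{\mathcal{G}}-\mathbb{P}[\mathcal{G}]\big)}\big\|_{\ell_\infty}\leq\delta_m(\mathcal{H})-\delta_n(\mathcal{H}).$$
   Context: Graphs: for a nonempty finite set $V$, $\binom{V}{\leq 2}$ denotes the nonempty subsets of $V$ of size at most 2 and $\binom{V}{2}$ those of size 2. A graph on $V$ is a subset of $\binom{V}{\leq 2}$ (size-2 elements are edges, size-1 elements self-loops); loopless means no self-loops. $V(G)$ is the union of members of $G$. Graphs $G,H$ are isomorphic if there is a bijection $\phi\colon V(G)\to V(H)$ with $\{x,y\}\in G\iff\{\phi(x),\phi(y)\}\in H$ for all $x,y\in V(G)$. $G_1+G_2$ is symmetric difference. Loopless graphs on $[n]$ are identified with $\mathbb{F}_2^{\binom{[n]}{2}}$; $\mathbb{P}$ is the uniform probability measure there. An $\mathcal{H}$-code is a family $\mathcal{G}$ of graphs on a common vertex set such that $G_1+G_2$ is not isomorphic to any graph of $\mathcal{H}$ for all $G_1,G_2\in\mathcal{G}$; $\delta_n(\mathcal{H})$ is the maximum density $\mathbb{P}[\mathcal{G}]$ of an $\mathcal{H}$-code $\mathcal{G}\subseteq\mathbb{F}_2^{\binom{[n]}{2}}$. Fourier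 transform on $\mathbb{F}_2^{\mathcal{I}}$: $\widehat f(\xi)=\mathbb{E}_x[f(x)(-1)^{|x\cap\xi|}]$ (expectation w.r.t. uniform measure), and $\|\widehat f\|_{\ell_\infty}=\max_\xi|\widehat f(\xi)|$. *)

theory Defs
  imports Complex_Main
begin

text \<open>Graphs are sets of nonempty vertex sets of size at most 2; V(G) is the union.\<close>

definition verts :: "'a set set \<Rightarrow> 'a set" where
  "verts G = \<Union> G"

definition loopless_graph :: "'a set set \<Rightarrow> bool" where
  "loopless_graph G \<longleftrightarrow> finite G \<and> (\<forall>e\<in>G. card e = 2)"

definition graph_iso :: "'a set set \<Rightarrow> 'b set set \<Rightarrow> bool" where
  "graph_iso G H \<longleftrightarrow> (\<exists>\<phi>. bij_betw \<phi> (verts G) (verts H) \<and>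
      (\<forall>x\<in>verts G. \<forall>y\<in>verts G. {x, y} \<in> G \<longleftrightarrow> {\<phi> x, \<phi> y} \<in> H))"

definition gsum :: "'a set set \<Rightarrow> 'a set set \<Rightarrow> 'a set set" where
  "gsum G1 G2 = (G1 - G2) \<union> (G2 - G1)"

text \<open>Edges of the complete graph on [n] = {1..n}; loopless graphs on [n] are subsets.\<close>
definition edges :: "nat \<Rightarrow> nat set set" where
  "edges n = {e. e \<subseteq> {1..n} \<and> card e = 2}"

definition is_code :: "'b set set set \<Rightarrow> 'a set set set \<Rightarrow> bool" where
  "is_code \<H> \<G> \<longleftrightarrow> (\<forall>G1\<in>\<G>. \<forall>G2\<in>\<G>. \<forall>H\<in>\<H>. \<not> graph_iso (gsum G1 G2) H)"

definition prob :: "nat \<Rightarrow> nat set set set \<Rightarrow> real" where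
  "prob n \<G> = real (card \<G>) / 2 ^ card (edges n)"

definition delta :: "nat \<Rightarrow> 'b set set set \<Rightarrow> real" where
  "delta n \<H> = Max {prob n \<G> | \<G>. \<G> \<subseteq> Pow (edges n) \<and> is_code \<H> \<G>}"

definition fourier :: "nat \<Rightarrow> (nat set set \<Rightarrow> real) \<Rightarrow> nat set set \<Rightarrow> real" where
  "fourier n f \<xi> = (\<Sum>x\<in>Pow (edges n). f x * (-1) ^ card (x \<inter> \<xi>)) / 2 ^ card (edges n)"

definition linf_fourier :: "nat \<Rightarrow> (nat set set \<Rightarrow> real) \<Rightarrow> real" where
  "linf_fourier n f = Max {\<bar>fourier n f \<xi>\<bar> | \<xi>. \<xi> \<subseteq> edges n}"

end

theory Submission
  imports Defs "HOL-Library.Ramsey"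
begin

lemma binom_le_4: "((m+m) choose m) \<le> (4::nat)^m"
proof -
  have "((m+m) choose m) \<le> 2^(m+m)" by (rule binomial_le_pow2)
  also have "(2::nat)^(m+m) = 4^m" by (simp add: power_add power_mult_distrib[symmetric])
  finally show ?thesis .
qed

lemma ramsey_bound:
  fixes V :: "'a set" and E :: "'a set set"
  assumes "finite V" "4^m \<le> card V"
  shows "\<exists>R\<subseteq>V. card R = m \<and> (clique R E \<or> indep R E)"
proof -
  define N where "N = ES 2 m m"
  have N: "partn_lst {..<N} [m,m] 2" unfolding N_def by (rule ramsey2_full)
  have "N \<le> card V" unfolding N_def ES2_choose using binom_le_4[of m] assms(2) by linarith
  then obtain v where u: "inj_on v {..<N}" "v ` {..<N} \<subseteq> V"
    by (metis card_le_inj card_lessThan finite_lessThan assms(1))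
  define f where "f \<equiv> \<lambda>e. if v ` e \<in> E then 0 else Suc 0"
  have f: "f \<in> nsets {..<N} 2 \<rightarrow> {..<Suc (Suc 0)}"
    by (simp add: f_def)
  then obtain i U where i: "i < 2" and gi: "f ` nsets U 2 \<subseteq> {i}"
    and U: "U \<in> nsets {..<N} ([m,m] ! i)"
    using N numeral_2_eq_2 by (auto simp: partn_lst_def monochromatic_def)
  show ?thesis
  proof (intro exI conjI)
    show "v ` U \<subseteq> V"
      using U u by (auto simp: image_subset_iff nsets_def)
    have "card (v ` U) = m \<and> clique (v ` U) E \<or> card (v ` U) = m \<and> indep (v ` U) E"
      using i unfolding numeral_2_eq_2
        using gi U u
        unfolding image_subset_iff nsets_2_eq clique_def indep_def less_Suc_eq
        by (auto simp: f_def nsets_def card_image inj_on_subset split: if_splits)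
    then show "card (v ` U) = m" "clique (v ` U) E \<or> indep (v ` U) E" by auto
  qed
qed

lemma iso_trans:
  assumes "graph_iso G G'" "graph_iso G' H" shows "graph_iso G H"
proof -
  obtain f where f: "bij_betw f (verts G) (verts G')" "\<forall>x\<in>verts G. \<forall>y\<in>verts G. {x,y}\<in>G \<longleftrightarrow> {f x, f y} \<in> G'"
    using assms(1) unfolding graph_iso_def by (elim exE conjE)
  obtain g where g: "bij_betw g (verts G') (verts H)" "\<forall>x\<in>verts G'. \<forall>y\<in>verts G'. {x,y}\<in>G' \<longleftrightarrow> {g x, g y} \<in> H"
    using assms(2) unfolding graph_iso_def by (elim exE conjE)
  have 1: "bij_betw (g o f) (verts G) (verts H)" using f(1) g(1) by (rule bij_betw_trans)
  have 2: "\<forall>x\<in>verts G. \<forall>y\<in>verts G. {x,y}\<in>G \<longleftrightarrow> {(g o f) x, (g o f) y} \<in> H"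
  proof (intro ballI)
    fix x y assume xy: "x \<in> verts G" "y \<in> verts G"
    then have "f x \<in> verts G'" "f y \<in> verts G'" using f(1) bij_betwE by blast+
    then show "{x,y}\<in>G \<longleftrightarrow> {(g o f) x, (g o f) y} \<in> H" using f(2) g(2) xy by simp
  qed
  show ?thesis unfolding graph_iso_def by (rule exI[of _ "g o f"]) (use 1 2 in simp)
qed

lemma iso_image:
  assumes "inj_on f S" "\<forall>e\<in>z. e \<subseteq> S \<and> card e = 2"
  shows "graph_iso z ((`) f ` z)"
proof -
  have vz: "verts z \<subseteq> S" using assms(2) unfolding verts_def by auto
  have vi: "verts ((`) f ` z) = f ` verts z" unfolding verts_def by auto
  have 1: "bij_betw f (verts z) (f ` verts z)" using inj_on_subset[OF assms(1) vz] by (rule inj_on_imp_bij_betw)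
  have 2: "\<forall>x\<in>verts z. \<forall>y\<in>verts z. {x,y}\<in>z \<longleftrightarrow> {f x, f y} \<in> (`) f ` z"
  proof (intro ballI iffI)
    fix x y
    have fe: "{f x, f y} = f ` {x,y}" by simp
    {
    assume "{x,y}\<in>z" then show "{f x, f y} \<in> (`) f ` z" unfolding fe by (rule imageI)
    next
    assume that: "x\<in>verts z" "y \<in> verts z"
    assume "{f x, f y} \<in> (`) f ` z"
    then obtain e where e: "e\<in>z" "f ` e = {f x, f y}" by auto
    have "e \<subseteq> S" using e assms(2) by auto
    moreover have "{x,y} \<subseteq> S" using that vz by auto
    moreover have "f ` e = f ` {x,y}" using e(2) by simp
    ultimately have "e = {x,y}" using inj_on_image_eq_iff[OF assms(1)] by blast
    then show "{x,y}\<in>z" using e by simp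
    }
  qed
  show ?thesis unfolding graph_iso_def vi by (rule exI[of _ f]) (use 1 2 in simp)
qed

lemma iso_card:
  assumes "graph_iso G H" "\<forall>e\<in>G. card e = 2" "\<forall>e\<in>H. card e = 2"
  shows "card G = card H"
proof -
  obtain f where f: "bij_betw f (verts G) (verts H)" "\<forall>x\<in>verts G. \<forall>y\<in>verts G. {x,y}\<in>G \<longleftrightarrow> {f x, f y} \<in> H"
    using assms(1) unfolding graph_iso_def by (elim exE conjE)
  have sub: "e \<subseteq> verts G" if "e \<in> G" for e using that unfolding verts_def by auto
  have inj: "inj_on ((`) f) G"
  proof (rule inj_on_subset)
    show "inj_on ((`) f) (Pow (verts G))" using bij_betw_imp_inj_on[OF f(1)] by (rule inj_on_image_Pow)
    show "G \<subseteq> Pow (verts G)" using sub by blast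
  qed
  have "(`) f ` G = H"
  proof
    show "(`) f ` G \<subseteq> H"
    proof
      fix h assume "h \<in> (`) f ` G"
      then obtain e where e: "e\<in>G" "h = f ` e" by auto
      have "card e = 2" using assms(2) e(1) by blast
      then obtain x y where xy: "e = {x,y}" by (meson card_2_iff)
      have "x\<in>verts G" "y\<in>verts G" using sub[OF e(1)] xy by auto
      then have "{f x, f y} \<in> H" using f(2) e(1) xy by simp
      then show "h \<in> H" using e xy by simp
    qed
  next
    show "H \<subseteq> (`) f ` G"
    proof
      fix h assume h: "h\<in>H"
      have "card h = 2" using assms(3) h by blast
      then obtain u v where uv: "h = {u,v}" by (meson card_2_iff)
      have "u \<in> verts H" "v\<in>verts H" using h uv unfolding verts_def by auto
      then obtain x y where xy: "x\<in>verts G" "y\<in>verts G" "u = f x" "v = f y"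
        using bij_betw_imp_surj_on[OF f(1)] by blast
      then have "{x,y} \<in> G" using f(2) h uv by simp
      moreover have "h = f ` {x,y}" using xy uv by simp
      ultimately show "h \<in> (`) f ` G" by blast
    qed
  qed
  then show ?thesis using card_image[OF inj] by simp
qed

lemma edges_nsets: "edges n = [{1..n}]\<^bsup>2\<^esup>"
proof -
  have "finite e" if "card e = 2" for e :: "nat set" using that by (intro card_ge_0_finite) simp
  then show ?thesis unfolding edges_def nsets_def by blast
qed

lemma finite_edges: "finite (edges n)"
  unfolding edges_nsets by (simp add: finite_imp_finite_nsets)

lemma delta_ge:
  assumes "D \<subseteq> Pow (edges m)" "is_code \<H> D"
  shows "real (card D) \<le> delta m \<H> * 2 ^ card (edges m)"
proof -
  have "finite {prob m \<G> | \<G>. \<G> \<subseteq> Pow (edges m) \<and> is_code \<H> \<G>}"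
    by (rule finite_subset[of _ "prob m ` Pow (Pow (edges m))"]) (use finite_edges in auto)
  then have "prob m D \<le> delta m \<H>" unfolding delta_def using assms by (intro Max_ge) auto
  then show ?thesis unfolding prob_def by (simp add: divide_le_eq)
qed

lemma gsum_card: assumes "finite A" "finite B"
  shows "card (gsum A B) + 2 * card (A \<inter> B) = card A + card B"
proof -
  have 1: "card A + card B = card (A \<union> B) + card (A \<inter> B)" by (rule card_Un_Int[OF assms])
  have u: "A \<union> B = gsum A B \<union> (A \<inter> B)" unfolding gsum_def by blast
  have "card (gsum A B \<union> (A \<inter> B)) = card (gsum A B) + card (A \<inter> B)"
    by (rule card_Un_disjoint) (use assms in \<open>auto simp: gsum_def\<close>)
  then show ?thesis using 1 u by simp
qed

lemma gsum_even: assumes "finite A" "finite B"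
  shows "even (card (gsum A B)) = (even (card A) = even (card B))"
proof -
  have "even (card (gsum A B) + 2 * card (A \<inter> B)) = even (card A + card B)" using gsum_card[OF assms] by simp
  then show ?thesis by simp
qed

lemma parity_code_bound:
  assumes HH: "\<forall>H\<in>\<H>. loopless_graph H \<and> H \<noteq> {} \<and> even (card H)" and m2: "m \<ge> 2"
    and D: "D \<subseteq> Pow (edges m)" "is_code \<H> D" "\<forall>x\<in>D. even (card x) = b"
  shows "2 * real (card D) \<le> delta m \<H> * 2 ^ card (edges m)"
proof -
  define e where "e = {1::nat,2}"
  have eE: "e \<in> edges m" using m2 by (auto simp: edges_def e_def)
  define t where "t x = gsum x {e}" for x
  define D' where "D' = D \<union> t ` D"
  have finx: "finite x" if "x \<in> Pow (edges m)" for x using that finite_edges finite_subset by blast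
  have par': "even (card (t x)) = (\<not> b)" if "x \<in> D" for x
    unfolding t_def using gsum_even[of x "{e}"] finx that D by auto
  have disj: "D \<inter> t ` D = {}" using par' D(3) by force
  have tt: "t (t x) = x" for x unfolding t_def gsum_def by auto
  have inj: "inj_on t D" by (metis inj_on_def tt)
  have finD: "finite D" using D(1) finite_edges by (meson finite_Pow_iff finite_subset)
  have cardD': "card D' = 2 * card D"
    unfolding D'_def using card_Un_disjoint[OF finD finite_imageI[OF finD] disj] card_image[OF inj] by simp
  have D'sub: "D' \<subseteq> Pow (edges m)" unfolding D'_def t_def gsum_def using D(1) eE by auto
  have "is_code \<H> D'"
    unfolding is_code_def
  proof (intro ballI notI)
    fix G1 G2 H assume G: "G1 \<in> D'" "G2 \<in> D'" "H \<in> \<H>" and iso: "graph_iso (gsum G1 G2) H"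
    have Hc: "\<forall>e\<in>H. card e = 2" "even (card H)" using HH G(3) unfolding loopless_graph_def by auto
    have ed: "\<forall>e\<in>gsum G1 G2. card e = 2" using G D'sub unfolding gsum_def edges_def by auto
    have cardeq: "card (gsum G1 G2) = card H" by (rule iso_card[OF iso ed Hc(1)])
    have fG: "finite G1" "finite G2" using G D'sub finx by auto
    show False
    proof (cases "(G1 \<in> D \<and> G2 \<in> D) \<or> (G1 \<in> t ` D \<and> G2 \<in> t ` D)")
      case True
      then show False
      proof
        assume "G1 \<in> D \<and> G2 \<in> D" then show False using D(2) G(3) iso unfolding is_code_def by blast
      next
        assume "G1 \<in> t ` D \<and> G2 \<in> t ` D"
        then obtain x1 x2 where x: "x1 \<in> D" "x2 \<in> D" "G1 = t x1" "G2 = t x2" by auto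
        have "gsum G1 G2 = gsum x1 x2" unfolding x t_def gsum_def by auto
        then show False using D(2) G(3) iso x unfolding is_code_def by metis
      qed
    next
      case False
      then have "even (card G1) \<noteq> even (card G2)" using G par' D(3) unfolding D'_def by auto
      then have "odd (card (gsum G1 G2))" using gsum_even[OF fG] by simp
      then show False using cardeq Hc(2) by simp
    qed
  qed
  then have "real (card D') \<le> delta m \<H> * 2 ^ card (edges m)" by (rule delta_ge[OF D'sub])
  then show ?thesis using cardD' by simp
qed

lemma half_count:
  fixes U :: "'a set set"
  assumes "finite U" "\<xi> \<subseteq> U" "\<xi> \<noteq> {}"
  shows "2 * card {y\<in>Pow U. even (card (y \<inter> \<xi>)) = b} = 2 ^ card U"
proof -
  obtain e where e: "e \<in> \<xi>" using assms(3) by blast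
  define t where "t y = gsum y {e}" for y
  define P where "P c = {y\<in>Pow U. even (card (y \<inter> \<xi>)) = c}" for c
  have tt: "t (t y) = y" for y unfolding t_def gsum_def by auto
  have tU: "t y \<subseteq> U" if "y \<subseteq> U" for y using that e assms(2) unfolding t_def gsum_def by auto
  have par: "even (card (t y \<inter> \<xi>)) = (\<not> even (card (y \<inter> \<xi>)))" if "y \<subseteq> U" for y
  proof -
    have "t y \<inter> \<xi> = gsum (y \<inter> \<xi>) {e}" using e unfolding t_def gsum_def by auto
    moreover have "finite (y \<inter> \<xi>)" using that assms(1) finite_subset by blast
    ultimately show ?thesis using gsum_even[of "y \<inter> \<xi>" "{e}"] by simp
  qed
  have bij: "bij_betw t (P c) (P (\<not> c))" for c
    by (rule bij_betwI[of t _ _ t]) (auto simp: P_def tU par tt)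
  have eqc: "card (P c) = card (P (\<not> c))" for c using bij_betw_same_card[OF bij] .
  have un: "Pow U = P True \<union> P False" unfolding P_def by auto
  have "card (Pow U) = card (P True) + card (P False)"
    unfolding un by (rule card_Un_disjoint) (use assms(1) in \<open>auto simp: P_def\<close>)
  then have "2 ^ card U = card (P True) + card (P False)" by (simp add: card_Pow assms(1))
  moreover have "card (P True) = card (P False)" using eqc[of True] by simp
  ultimately have "2 * card (P b) = 2 ^ card U" by (cases b) (simp_all add: mult_2)
  then show ?thesis unfolding P_def .
qed

lemma transport:
  assumes S: "finite S" "card S = m" and C: "C \<subseteq> Pow ([S]\<^bsup>2\<^esup>)" "is_code \<H> C"
  shows "\<exists>D. D \<subseteq> Pow (edges m) \<and> is_code \<H> D \<and> card D = card C \<and> (\<forall>y\<in>D. \<exists>x\<in>C. card y = card x)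
          \<and> card ([S]\<^bsup>2\<^esup>) = card (edges m)"
proof -
  obtain h where h: "bij_betw h {1..m} S" using ex_bij_betw_nat_finite_1[OF S(1)] S(2) by auto
  define f where "f = inv_into {1..m} h"
  have f: "bij_betw f S {1..m}" unfolding f_def by (rule bij_betw_inv_into[OF h])
  have injf: "inj_on f S" using f bij_betw_imp_inj_on by blast
  define g where "g = (`) f"
  have gb: "bij_betw g ([S]\<^bsup>2\<^esup>) (edges m)" unfolding g_def edges_nsets by (rule bij_betw_nsets[OF f])
  have ginj: "inj_on g ([S]\<^bsup>2\<^esup>)" using gb bij_betw_imp_inj_on by blast
  define D where "D = (`) g ` C"
  have injG: "inj_on ((`) g) C" using inj_on_subset[OF inj_on_image_Pow[OF ginj] C(1)] .
  have cardD: "card D = card C" unfolding D_def by (rule card_image[OF injG])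
  have Dsub: "D \<subseteq> Pow (edges m)" unfolding D_def using C(1) bij_betw_imp_surj_on[OF gb] by auto
  have cardx: "card (g ` x) = card x" if "x \<in> C" for x
    using card_image[OF inj_on_subset[OF ginj]] that C(1) by auto
  have code: "is_code \<H> D"
    unfolding is_code_def
  proof (intro ballI notI)
    fix Y1 Y2 H assume Y: "Y1 \<in> D" "Y2 \<in> D" "H \<in> \<H>" and iso: "graph_iso (gsum Y1 Y2) H"
    obtain x1 x2 where x: "x1 \<in> C" "x2 \<in> C" "Y1 = g ` x1" "Y2 = g ` x2" using Y unfolding D_def by auto
    have sub: "x1 \<subseteq> [S]\<^bsup>2\<^esup>" "x2 \<subseteq> [S]\<^bsup>2\<^esup>" using x C(1) by auto
    have d1: "g ` (x1 - x2) = g ` x1 - g ` x2" by (rule inj_on_image_set_diff[OF ginj]) (use sub in auto)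
    have d2: "g ` (x2 - x1) = g ` x2 - g ` x1" by (rule inj_on_image_set_diff[OF ginj]) (use sub in auto)
    have "gsum Y1 Y2 = g ` gsum x1 x2"
      unfolding gsum_def image_Un d1 d2 x(3,4) ..
    moreover have "graph_iso (gsum x1 x2) (g ` gsum x1 x2)"
      unfolding g_def
      by (rule iso_image[OF injf]) (use sub in \<open>auto simp: gsum_def nsets_def\<close>)
    ultimately have "graph_iso (gsum x1 x2) H" using iso iso_trans by metis
    then show False using C(2) x Y(3) unfolding is_code_def by blast
  qed
  have ce: "card ([S]\<^bsup>2\<^esup>) = card (edges m)" using bij_betw_same_card[OF gb] .
  have "\<forall>y\<in>D. \<exists>x\<in>C. card y = card x"
  proof
    fix y assume "y \<in> D"
    then obtain x where "x \<in> C" "y = g ` x" unfolding D_def by auto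
    then show "\<exists>x\<in>C. card y = card x" using cardx by auto
  qed
  then show ?thesis using Dsub code cardD ce by blast
qed

lemma fiber_D:
  assumes S: "S \<subseteq> {1..n}" "card S = m"
    and A: "A \<subseteq> Pow (edges n)" "is_code \<H> A"
  shows "\<exists>D. D \<subseteq> Pow (edges m) \<and> is_code \<H> D \<and> card D = card {x\<in>A. x - [S]\<^bsup>2\<^esup> = y}
     \<and> (\<forall>z\<in>D. \<exists>x\<in>{x\<in>A. x - [S]\<^bsup>2\<^esup> = y}. card z = card (x \<inter> [S]\<^bsup>2\<^esup>))
     \<and> card ([S]\<^bsup>2\<^esup>) = card (edges m)"
proof -
  let ?K = "[S]\<^bsup>2\<^esup>"
  define F where "F = {x\<in>A. x - ?K = y}"
  define r where "r x = x \<inter> ?K" for x :: "nat set set"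
  have finS: "finite S" using S(1) finite_subset by blast
  have injr: "inj_on r F"
  proof (rule inj_onI)
    fix x1 x2 assume "x1 \<in> F" "x2 \<in> F" "r x1 = r x2"
    then have "x1 - ?K = x2 - ?K" "x1 \<inter> ?K = x2 \<inter> ?K" unfolding F_def r_def by auto
    then show "x1 = x2" by blast
  qed
  define C where "C = r ` F"
  have cardC: "card C = card F" unfolding C_def by (rule card_image[OF injr])
  have Csub: "C \<subseteq> Pow ?K" unfolding C_def r_def by auto
  have Ccode: "is_code \<H> C"
    unfolding is_code_def
  proof (intro ballI notI)
    fix c1 c2 H assume c: "c1 \<in> C" "c2 \<in> C" "H \<in> \<H>" and iso: "graph_iso (gsum c1 c2) H"
    obtain x1 x2 where x: "x1 \<in> F" "x2 \<in> F" "c1 = r x1" "c2 = r x2" using c unfolding C_def by auto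
    have "x1 - ?K = x2 - ?K" using x unfolding F_def by auto
    then have "gsum c1 c2 = gsum x1 x2" unfolding x r_def gsum_def by blast
    moreover have "x1 \<in> A" "x2 \<in> A" using x unfolding F_def by auto
    ultimately show False using iso A(2) c(3) unfolding is_code_def by metis
  qed
  obtain D where D: "D \<subseteq> Pow (edges m)" "is_code \<H> D" "card D = card C" "\<forall>y\<in>D. \<exists>x\<in>C. card y = card x"
     "card ?K = card (edges m)"
    using transport[OF finS S(2) Csub Ccode] by blast
  have "\<forall>z\<in>D. \<exists>x\<in>F. card z = card (x \<inter> ?K)"
  proof
    fix z assume "z \<in> D" then obtain c where c: "c \<in> C" "card z = card c" using D(4) by blast
    then obtain x where "x \<in> F" "c = r x" unfolding C_def by auto
    then show "\<exists>x\<in>F. card z = card (x \<inter> ?K)" using c unfolding r_def by auto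
  qed
  then have 5: "\<forall>z\<in>D. \<exists>x\<in>{x\<in>A. x - ?K = y}. card z = card (x \<inter> ?K)" unfolding F_def .
  have 3: "card D = card {x\<in>A. x - ?K = y}" using D(3) cardC unfolding F_def by simp
  show ?thesis by (intro exI[of _ D] conjI D(1) D(2) 3 5 D(5))
qed

lemma fiber_card:
  assumes S: "S \<subseteq> {1..n}" "card S = m"
    and A: "A \<subseteq> Pow (edges n)" "is_code \<H> A"
  shows "real (card {x\<in>A. x - [S]\<^bsup>2\<^esup> = y}) \<le> delta m \<H> * 2 ^ card ([S]\<^bsup>2\<^esup>)"
proof -
  obtain D where D: "D \<subseteq> Pow (edges m)" "is_code \<H> D" "card D = card {x\<in>A. x - [S]\<^bsup>2\<^esup> = y}"
     "\<forall>z\<in>D. \<exists>x\<in>{x\<in>A. x - [S]\<^bsup>2\<^esup> = y}. card z = card (x \<inter> [S]\<^bsup>2\<^esup>)"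
     "card ([S]\<^bsup>2\<^esup>) = card (edges m)"
    using fiber_D[OF S A, of y] by (elim exE conjE)
  note D = D(1,2,3,5)
  show ?thesis using delta_ge[OF D(1) D(2)] D(3,4) by simp
qed

lemma fiber_card_par:
  assumes HH: "\<forall>H\<in>\<H>. loopless_graph H \<and> H \<noteq> {} \<and> even (card H)" and m2: "m \<ge> 2"
    and S: "S \<subseteq> {1..n}" "card S = m"
    and A: "A \<subseteq> Pow (edges n)" "is_code \<H> A"
    and par: "\<forall>x\<in>A. x - [S]\<^bsup>2\<^esup> = y \<longrightarrow> even (card (x \<inter> [S]\<^bsup>2\<^esup>)) = b"
  shows "2 * real (card {x\<in>A. x - [S]\<^bsup>2\<^esup> = y}) \<le> delta m \<H> * 2 ^ card ([S]\<^bsup>2\<^esup>)"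
proof -
  obtain D where D: "D \<subseteq> Pow (edges m)" "is_code \<H> D" "card D = card {x\<in>A. x - [S]\<^bsup>2\<^esup> = y}"
     "\<forall>z\<in>D. \<exists>x\<in>{x\<in>A. x - [S]\<^bsup>2\<^esup> = y}. card z = card (x \<inter> [S]\<^bsup>2\<^esup>)"
     "card ([S]\<^bsup>2\<^esup>) = card (edges m)"
    using fiber_D[OF S A, of y] by (elim exE conjE)
  have "\<forall>z\<in>D. even (card z) = b"
  proof
    fix z assume "z \<in> D"
    then obtain x where "x \<in> A" "x - [S]\<^bsup>2\<^esup> = y" "card z = card (x \<inter> [S]\<^bsup>2\<^esup>)" using D(4) by blast
    then show "even (card z) = b" using par by auto
  qed
  then show ?thesis using parity_code_bound[OF HH m2 D(1) D(2), of b] D(3,5) by simp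
qed

lemma fiber_sum:
  assumes "(\<lambda>x. x - K) ` A \<subseteq> T" "finite T" "\<And>y. y \<in> T \<Longrightarrow> real (card {x\<in>A. x - K = y}) \<le> B"
  shows "real (card A) \<le> B * card T"
proof -
  have eq: "(\<Union>y\<in>T. {x\<in>A. x - K = y}) = A" using assms(1) by auto
  have "card A \<le> (\<Sum>y\<in>T. card {x\<in>A. x - K = y})"
    using card_UN_le[OF assms(2), of "\<lambda>y. {x\<in>A. x - K = y}"] eq by simp
  then have "real (card A) \<le> (\<Sum>y\<in>T. real (card {x\<in>A. x - K = y}))"
    by (metis of_nat_le_iff of_nat_sum)
  also have "\<dots> \<le> (\<Sum>y\<in>T. B)" using assms(3) by (rule sum_mono)
  finally show ?thesis by (simp add: mult.commute)
qed

lemma full_bound: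
  assumes mn: "m \<le> n" and G: "G \<subseteq> Pow (edges n)" "is_code \<H> G"
  shows "real (card G) \<le> delta m \<H> * 2 ^ card (edges n)"
proof -
  let ?K = "[{1..m}]\<^bsup>2\<^esup>"
  define U where "U = edges n - ?K"
  have KE: "?K \<subseteq> edges n" using mn unfolding edges_nsets nsets_def by auto
  have finE: "finite (edges n)" by (rule finite_edges)
  have finU: "finite U" unfolding U_def using finE by simp
  have cardE: "card (edges n) = card ?K + card U"
  proof -
    have "card U = card (edges n) - card ?K" unfolding U_def by (rule card_Diff_subset[OF finite_subset[OF KE finE] KE])
    moreover have "card ?K \<le> card (edges n)" by (rule card_mono[OF finE KE])
    ultimately show ?thesis by linarith
  qed
  have TA: "(\<lambda>x. x - ?K) ` G \<subseteq> Pow U" using G(1) unfolding U_def by auto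
  have fib: "real (card {x\<in>G. x - ?K = y}) \<le> delta m \<H> * 2 ^ card ?K" if "y \<in> Pow U" for y
    by (rule fiber_card) (use mn G in auto)
  have "real (card G) \<le> (delta m \<H> * 2 ^ card ?K) * card (Pow U)"
    by (rule fiber_sum[OF TA _ fib]) (use finU in simp)
  also have "\<dots> = delta m \<H> * 2 ^ card (edges n)"
    using finU by (simp add: card_Pow cardE power_add)
  finally show ?thesis .
qed

lemma mult2_le:
  fixes a X t :: real
  assumes "a \<le> X * t"
  shows "2 * a \<le> X * (2 * t)"
  using assms by (simp add: algebra_simps)

lemma bound_main:
  assumes HH: "\<forall>H\<in>\<H>. loopless_graph H \<and> H \<noteq> {} \<and> even (card H)" and m2: "m \<ge> 2"
    and n: "4 ^ m \<le> n" and G: "G \<subseteq> Pow (edges n)" "is_code \<H> G"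
    and xi: "\<xi> \<subseteq> edges n" "\<xi> \<noteq> {}"
  shows "2 * real (card {x\<in>G. even (card (x \<inter> \<xi>)) = b}) \<le> delta m \<H> * 2 ^ card (edges n)"
proof -
  obtain R where R: "R \<subseteq> {1..n}" "card R = m" "clique R \<xi> \<or> indep R \<xi>"
    using ramsey_bound[of "{1..n}" m \<xi>] n by auto
  let ?K = "[R]\<^bsup>2\<^esup>"
  define A where "A = {x\<in>G. even (card (x \<inter> \<xi>)) = b}"
  define U where "U = edges n - ?K"
  have KE: "?K \<subseteq> edges n" using R(1) unfolding edges_nsets nsets_def by auto
  have finE: "finite (edges n)" by (rule finite_edges)
  have finU: "finite U" unfolding U_def using finE by simp
  have cardE: "card (edges n) = card ?K + card U"
  proof -
    have "card U = card (edges n) - card ?K" unfolding U_def by (rule card_Diff_subset[OF finite_subset[OF KE finE] KE])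
    moreover have "card ?K \<le> card (edges n)" by (rule card_mono[OF finE KE])
    ultimately show ?thesis by linarith
  qed
  have Asub: "A \<subseteq> Pow (edges n)" using G(1) unfolding A_def by auto
  have Acode: "is_code \<H> A" using G(2) unfolding is_code_def A_def by auto
  have finx: "finite x" if "x \<in> A" for x using that Asub finE finite_subset by blast
  from R(3) show ?thesis
  proof
    assume cl: "clique R \<xi>"
    have Kxi: "?K \<subseteq> \<xi>"
    proof
      fix e assume "e \<in> ?K"
      then have "e \<subseteq> R" "card e = 2" unfolding nsets_def by auto
      then obtain v w where "e = {v,w}" "v \<noteq> w" "v \<in> R" "w \<in> R" by (metis card_2_iff insert_subset)
      then show "e \<in> \<xi>" using cl unfolding clique_def by blast
    qed
    have TA: "(\<lambda>x. x - ?K) ` A \<subseteq> Pow U" using Asub unfolding U_def by auto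
    have fib: "real (card {x\<in>A. x - ?K = y}) \<le> delta m \<H> * 2 ^ card ?K / 2" if "y \<in> Pow U" for y
    proof -
      have "\<forall>x\<in>A. x - ?K = y \<longrightarrow> even (card (x \<inter> ?K)) = (even (card (y \<inter> \<xi>)) = b)"
      proof (intro ballI impI)
        fix x assume x: "x \<in> A" "x - ?K = y"
        have u: "x \<inter> \<xi> = (x \<inter> ?K) \<union> (y \<inter> \<xi>)" using Kxi x(2) by blast
        have "card ((x \<inter> ?K) \<union> (y \<inter> \<xi>)) = card (x \<inter> ?K) + card (y \<inter> \<xi>)"
          by (rule card_Un_disjoint) (use finx[OF x(1)] x(2) in auto)
        then have "card (x \<inter> \<xi>) = card (x \<inter> ?K) + card (y \<inter> \<xi>)" using u by simp
        moreover have "even (card (x \<inter> \<xi>)) = b" using x(1) unfolding A_def by simp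
        ultimately show "even (card (x \<inter> ?K)) = (even (card (y \<inter> \<xi>)) = b)" by auto
      qed
      then have "2 * real (card {x\<in>A. x - ?K = y}) \<le> delta m \<H> * 2 ^ card ?K"
        by (rule fiber_card_par[OF HH m2 R(1) R(2) Asub Acode])
      then show ?thesis by simp
    qed
    have "real (card A) \<le> (delta m \<H> * 2 ^ card ?K / 2) * card (Pow U)"
      by (rule fiber_sum[OF TA _ fib]) (use finU in simp)
    then have "2 * real (card A) \<le> (delta m \<H> * 2 ^ card ?K / 2) * (2 * real (card (Pow U)))"
      by (rule mult2_le)
    also have "\<dots> = delta m \<H> * 2 ^ card (edges n)"
      using finU by (simp add: card_Pow cardE power_add)
    finally show ?thesis unfolding A_def .
  next
    assume ind: "indep R \<xi>"
    have Kxi: "?K \<inter> \<xi> = {}"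
    proof (rule ccontr)
      assume "?K \<inter> \<xi> \<noteq> {}"
      then obtain e where e: "e \<in> ?K" "e \<in> \<xi>" by blast
      then have "e \<subseteq> R" "card e = 2" unfolding nsets_def by auto
      then obtain v w where "e = {v,w}" "v \<noteq> w" "v \<in> R" "w \<in> R" by (metis card_2_iff insert_subset)
      then show False using ind e(2) unfolding indep_def by blast
    qed
    define T where "T = {y\<in>Pow U. even (card (y \<inter> \<xi>)) = b}"
    have xiU: "\<xi> \<subseteq> U" using xi(1) Kxi unfolding U_def by blast
    have cT: "2 * card T = 2 ^ card U" unfolding T_def by (rule half_count[OF finU xiU xi(2)])
    have finT: "finite T" unfolding T_def using finU by simp
    have TA: "(\<lambda>x. x - ?K) ` A \<subseteq> T"
    proof
      fix z assume "z \<in> (\<lambda>x. x - ?K) ` A"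
      then obtain x where x: "x \<in> A" "z = x - ?K" by blast
      have e: "(x - ?K) \<inter> \<xi> = x \<inter> \<xi>" using Kxi by blast
      have "z \<subseteq> U" using x Asub unfolding U_def by auto
      moreover have "even (card (z \<inter> \<xi>)) = b" using x(1) e x(2) unfolding A_def by simp
      ultimately show "z \<in> T" unfolding T_def by simp
    qed
    have fib: "real (card {x\<in>A. x - ?K = y}) \<le> delta m \<H> * 2 ^ card ?K" if "y \<in> T" for y
      by (rule fiber_card[OF R(1) R(2) Asub Acode])
    have "real (card A) \<le> (delta m \<H> * 2 ^ card ?K) * card T"
      by (rule fiber_sum[OF TA finT fib])
    then have "2 * real (card A) \<le> (delta m \<H> * 2 ^ card ?K) * (2 * real (card T))"
      by (rule mult2_le)
    also have "\<dots> = (delta m \<H> * 2 ^ card ?K) * 2 ^ card U"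
      using cT by (metis of_nat_mult of_nat_numeral of_nat_power)
    also have "\<dots> = delta m \<H> * 2 ^ card (edges n)"
      by (simp add: cardE power_add)
    finally show ?thesis unfolding A_def .
  qed
qed

lemma arith1:
  fixes a b d M :: real
  assumes "M > 0" "2*a \<le> d*M" "2*b \<le> d*M"
  shows "\<bar>(a - b)/M\<bar> \<le> d - (a+b)/M"
proof -
  have "\<bar>a - b\<bar> \<le> d*M - (a+b)" using assms by (simp add: abs_if)
  then have "\<bar>a-b\<bar>/M \<le> (d*M - (a+b))/M" using assms(1) by (simp add: divide_right_mono)
  moreover have "\<bar>(a - b)/M\<bar> = \<bar>a-b\<bar>/M" using assms(1) by (simp add: abs_divide)
  moreover have "(d*M - (a+b))/M = d - (a+b)/M" using assms(1) by (simp add: diff_divide_distrib)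
  ultimately show ?thesis by linarith
qed

theorem lemma3p4:
  fixes \<H> :: "'b set set set" and n m :: nat and \<G> :: "nat set set set"
  assumes "\<forall>H\<in>\<H>. loopless_graph H \<and> H \<noteq> {} \<and> even (card H)"
    and "n \<ge> 2" and "m \<ge> 2" and "n \<ge> 4 ^ m"
    and "\<G> \<subseteq> Pow (edges n)" and "is_code \<H> \<G>"
    and "prob n \<G> = delta n \<H>"
  shows "linf_fourier n (\<lambda>x. (if x \<in> \<G> then 1 else 0) - prob n \<G>) \<le> delta m \<H> - delta n \<H>"
proof -
  note HH = assms(1)
  have m2: "m \<ge> 2" using assms(3) .
  have mn: "m \<le> n"
  proof -
    have "m < 2^m" by (rule less_exp)
    also have "(2::nat)^m \<le> 4^m" by (rule power_mono) simp_all
    finally show ?thesis using assms(4) by linarith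
  qed
  let ?N = "card (edges n)"
  let ?p = "prob n \<G>"
  let ?f = "\<lambda>x. (if x \<in> \<G> then 1 else 0) - prob n \<G> :: real"
  have finE: "finite (edges n)" by (rule finite_edges)
  have finP: "finite (Pow (edges n))" using finE by simp
  have full: "real (card \<G>) \<le> delta m \<H> * 2 ^ ?N" by (rule full_bound[OF mn assms(5) assms(6)])
  have pdef: "?p = real (card \<G>) / 2 ^ ?N" unfolding prob_def ..
  have dn: "delta n \<H> = ?p" using assms(7) by simp
  have Mpos: "(0::real) < 2 ^ ?N" by simp
  have key: "\<bar>fourier n ?f \<xi>\<bar> \<le> delta m \<H> - delta n \<H>" if xi: "\<xi> \<subseteq> edges n" for \<xi>
  proof -
    define Ev where "Ev = {x\<in>Pow (edges n). even (card (x \<inter> \<xi>)) = True}"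
    define Od where "Od = {x\<in>Pow (edges n). even (card (x \<inter> \<xi>)) = False}"
    have un: "Pow (edges n) = Ev \<union> Od" unfolding Ev_def Od_def by auto
    have dj: "Ev \<inter> Od = {}" unfolding Ev_def Od_def by auto
    have finEv: "finite Ev" "finite Od" unfolding Ev_def Od_def using finP by auto
    have S1: "(\<Sum>x\<in>Pow (edges n). ?f x * (-1) ^ card (x \<inter> \<xi>)) = (\<Sum>x\<in>Ev. ?f x) - (\<Sum>x\<in>Od. ?f x)"
    proof -
      have "(\<Sum>x\<in>Pow (edges n). ?f x * (-1) ^ card (x \<inter> \<xi>))
          = (\<Sum>x\<in>Ev. ?f x * (-1) ^ card (x \<inter> \<xi>)) + (\<Sum>x\<in>Od. ?f x * (-1) ^ card (x \<inter> \<xi>))"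
        unfolding un by (rule sum.union_disjoint[OF finEv dj])
      moreover have "(\<Sum>x\<in>Ev. ?f x * (-1) ^ card (x \<inter> \<xi>)) = (\<Sum>x\<in>Ev. ?f x)"
        by (rule sum.cong) (auto simp: Ev_def)
      moreover have "(\<Sum>x\<in>Od. ?f x * (-1) ^ card (x \<inter> \<xi>)) = (\<Sum>x\<in>Od. - ?f x)"
        by (rule sum.cong) (auto simp: Od_def)
      moreover have "(\<Sum>x\<in>Od. - ?f x) = - (\<Sum>x\<in>Od. ?f x)" by (rule sum_negf)
      ultimately show ?thesis by linarith
    qed
    define Ga where "Ga = {x\<in>\<G>. even (card (x \<inter> \<xi>)) = True}"
    define Gb where "Gb = {x\<in>\<G>. even (card (x \<inter> \<xi>)) = False}"
    have sumE: "(\<Sum>x\<in>E. ?f x) = real (card {x\<in>E. x \<in> \<G>}) - ?p * card E" if "finite E" for E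
    proof -
      have "(\<Sum>x\<in>E. ?f x) = (\<Sum>x\<in>E. (if x \<in> \<G> then 1 else 0)) - (\<Sum>x\<in>E. ?p)"
        by (rule sum_subtractf)
      moreover have "(\<Sum>x\<in>E. (if x \<in> \<G> then 1 else (0::real))) = real (card {x\<in>E. x \<in> \<G>})"
        using sum.inter_filter[OF that, of "\<lambda>_. (1::real)" "\<lambda>x. x \<in> \<G>"] by simp
      moreover have "(\<Sum>x\<in>E. ?p) = ?p * card E" by simp
      ultimately show ?thesis by linarith
    qed
    have ea: "{x\<in>Ev. x \<in> \<G>} = Ga" unfolding Ev_def Ga_def using assms(5) by auto
    have eb: "{x\<in>Od. x \<in> \<G>} = Gb" unfolding Od_def Gb_def using assms(5) by auto
    have finG: "finite \<G>" using assms(5) finP finite_subset by blast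
    have Gab: "card \<G> = card Ga + card Gb"
    proof -
      have "\<G> = Ga \<union> Gb" unfolding Ga_def Gb_def by auto
      moreover have "card (Ga \<union> Gb) = card Ga + card Gb"
        by (rule card_Un_disjoint) (use finG in \<open>auto simp: Ga_def Gb_def\<close>)
      ultimately show ?thesis by simp
    qed
    have F: "fourier n ?f \<xi> = ((real (card Ga) - ?p * card Ev) - (real (card Gb) - ?p * card Od)) / 2 ^ ?N"
      unfolding fourier_def S1 sumE[OF finEv(1)] sumE[OF finEv(2)] ea eb ..
    show ?thesis
    proof (cases "\<xi> = {}")
      case True
      then have "Od = {}" "Ev = Pow (edges n)" unfolding Od_def Ev_def by auto
      then have "card Od = 0" "card Ev = 2 ^ ?N" using finE by (auto simp: card_Pow)
      moreover have "card Gb = 0" using \<open>Od = {}\<close> eb by auto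
      moreover have "card Ga = card \<G>" using Gab \<open>card Gb = 0\<close> by simp
      ultimately have "fourier n ?f \<xi> = (real (card \<G>) - ?p * 2 ^ ?N) / 2 ^ ?N" using F by simp
      also have "\<dots> = 0" using pdef by simp
      finally have "fourier n ?f \<xi> = 0" .
      moreover have "?p \<le> delta m \<H>" using full pdef Mpos by (simp add: divide_le_eq)
      ultimately show ?thesis using dn by simp
    next
      case False
      have cE: "2 * card Ev = 2 ^ ?N" unfolding Ev_def by (rule half_count[OF finE xi False])
      have cO: "2 * card Od = 2 ^ ?N" unfolding Od_def by (rule half_count[OF finE xi False])
      have eo: "real (card Ev) = real (card Od)" using cE cO by simp
      have ba: "2 * real (card Ga) \<le> delta m \<H> * 2 ^ ?N" unfolding Ga_def
        by (rule bound_main[OF HH m2 assms(4) assms(5) assms(6) xi False])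
      have bb: "2 * real (card Gb) \<le> delta m \<H> * 2 ^ ?N" unfolding Gb_def
        by (rule bound_main[OF HH m2 assms(4) assms(5) assms(6) xi False])
      have "fourier n ?f \<xi> = (real (card Ga) - real (card Gb)) / 2 ^ ?N" using F eo by simp
      moreover have "\<bar>(real (card Ga) - real (card Gb)) / 2 ^ ?N\<bar> \<le> delta m \<H> - (real (card Ga) + real (card Gb)) / 2 ^ ?N"
        by (rule arith1[OF Mpos ba bb])
      moreover have "(real (card Ga) + real (card Gb)) / 2 ^ ?N = delta n \<H>" using dn pdef Gab by simp
      ultimately show ?thesis by simp
    qed
  qed
  have eqs: "{\<bar>fourier n ?f \<xi>\<bar> | \<xi>. \<xi> \<subseteq> edges n} = (\<lambda>\<xi>. \<bar>fourier n ?f \<xi>\<bar>) ` Pow (edges n)" by auto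
  show ?thesis
    unfolding linf_fourier_def eqs
  proof (rule Max.boundedI)
    show "finite ((\<lambda>\<xi>. \<bar>fourier n ?f \<xi>\<bar>) ` Pow (edges n))" using finP by simp
    show "(\<lambda>\<xi>. \<bar>fourier n ?f \<xi>\<bar>) ` Pow (edges n) \<noteq> {}" by blast
    show "\<And>a. a \<in> (\<lambda>\<xi>. \<bar>fourier n ?f \<xi>\<bar>) ` Pow (edges n) \<Longrightarrow> a \<le> delta m \<H> - delta n \<H>"
      using key by auto
  qed
qed

end
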